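(* Let $\underline{s}=(s_1,\dots,s_d)\in\mathbb{R}_+^d$ with $s_{i+1}\le s_i$ for all $i$, and let $\underline{t},\underline{\bar s},\underline{\bar t}\in\mathbb{R}_+^d$ be likewise non-increasingly ordered. Then the pair $(\underline{s},\underline{t})$ equals the pair $(\underline{\bar s},\underline{\bar t})$ up to reordering, i.e. $(\underline s,\underline t)=(\underline{\bar s},\underline{\bar t})$ or $(\underline s,\underline t)=(\underline{\bar t},\underline{\bar s})$, if and only if both of the following hold: 1. $e_i(\underline s)+e_i(\underline t)=e_i(\underline{\bar s})+e_i(\underline{\bar t})$ for all $i=1,\dots,d$; 2. $\sum_{i+j=k,\;0\le i,j\le d}e_i(\underline s)e_j(\underline t)=\sum_{i+j=k,\;0\le i,j\le d}e_i(\underline{\bar s})e_j(\underline{\bar t})$ for all $k=1,\dots,2d$.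
   Context: For a tuple $x=(x_1,\dots,x_n)$, the elementary symmetric polynomial of degree $k$ is $e_k(x)=\sum_{i_1<i_2<\cdots<i_k}x_{i_1}\cdots x_{i_k}$ for $1\le k\le n$, with $e_0(x)=1$ and $e_k(x)=0$ for $k>n$. *)

theory Defs
  imports Complex_Main
begin

definition esym :: "nat \<Rightarrow> real list \<Rightarrow> real" where
  "esym k xs = (\<Sum>S\<in>{S. S \<subseteq> {..<length xs} \<and> card S = k}. \<Prod>i\<in>S. xs ! i)"

definition ordered_nonneg :: "nat \<Rightarrow> real list \<Rightarrow> bool" where
  "ordered_nonneg d xs \<longleftrightarrow> length xs = d \<and> (\<forall>i<d. 0 \<le> xs ! i)
     \<and> (\<forall>i. Suc i < d \<longrightarrow> xs ! Suc i \<le> xs ! i)"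

end

theory Submission
  imports Defs "HOL-Computational_Algebra.Polynomial" "HOL-Library.Multiset"
begin

definition PP :: "real list \<Rightarrow> real poly" where
  "PP xs = (\<Prod>i<length xs. [:1, xs!i:])"

lemma prod_monom1: "finite X \<Longrightarrow> (\<Prod>i\<in>X. monom (f i :: real) 1) = monom (\<Prod>i\<in>X. f i) (card X)"
  by (induction X rule: finite_induct) (auto simp: mult_monom monom_0 one_pCons)

lemma coeff_PP: "coeff (PP xs) k = esym k xs"
proof -
  have "PP xs = (\<Prod>i<length xs. monom (xs!i) 1 + 1)"
    unfolding PP_def by (intro prod.cong refl) (simp add: monom_Suc monom_0 one_pCons)
  also have "\<dots> = (\<Sum>X\<in>Pow {..<length xs}. monom (\<Prod>i\<in>X. xs!i) (card X))"
    by (subst prod_add) (auto intro!: sum.cong simp: prod_monom1[OF finite_subset, unfolded One_nat_def])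
  finally have "coeff (PP xs) k = (\<Sum>X\<in>Pow {..<length xs}. if card X = k then (\<Prod>i\<in>X. xs!i) else 0)"
    by (simp add: coeff_sum)
  also have "\<dots> = (\<Sum>X\<in>{X \<in> Pow {..<length xs}. card X = k}. (\<Prod>i\<in>X. xs!i))"
    by (subst sum.inter_filter) auto
  finally show ?thesis unfolding esym_def by (simp add: Pow_def)
qed

lemma PP_mset: "PP xs = prod_mset (image_mset (\<lambda>x. [:1,x:]) (mset xs))"
proof -
  have "prod_mset (image_mset (\<lambda>x. [:1,x:]) (mset xs)) = prod_list (map (\<lambda>x. [:1,x:]) xs)"
    by (metis mset_map prod_mset_prod_list)
  also have "\<dots> = (\<Prod>i<length xs. [:1, xs!i:])"
    by (simp add: prod.list_conv_set_nth atLeast0LessThan)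
  finally show ?thesis unfolding PP_def by simp
qed

lemma esym_0: "esym 0 xs = 1"
proof -
  have "{S. S \<subseteq> {..<length xs} \<and> card S = 0} = {{}}"
    by (auto dest: finite_subset)
  then show ?thesis unfolding esym_def by simp
qed

lemma esym_big: "length xs < k \<Longrightarrow> esym k xs = 0"
proof -
  assume "length xs < k"
  note lt = this
  have c: "card S \<le> length xs" if "S \<subseteq> {..<length xs}" for S
    using card_mono[OF finite_lessThan that] by simp
  have "{S. S \<subseteq> {..<length xs} \<and> card S = k} = {}"
  proof (rule equals0I)
    fix S assume "S \<in> {S. S \<subseteq> {..<length xs} \<and> card S = k}"
    then have "card S \<le> length xs" "card S = k" using c by auto
    then show False using lt by simp
  qed
  then show ?thesis unfolding esym_def by (simp only: sum.empty)
qed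

lemma PM_nz: "prod_mset (image_mset (\<lambda>x. [:1,x:]) M) \<noteq> (0 :: real poly)"
  by (induction M) (auto simp del: mult_pCons_left)

lemma order_PM: "(c::real) \<noteq> 0 \<Longrightarrow> order (-1/c) (prod_mset (image_mset (\<lambda>x. [:1,x:]) M)) = count M c"
proof (induction M)
  case empty
  then show ?case by (simp add: order_0I)
next
  case (add x M)
  have "order (-1/c) [:1,x:] = (if x = c then 1 else 0)"
  proof (cases "x = c")
    case True
    have "poly [:1,x:] (-1/c) = 0" using True add.prems by simp
    then have "order (-1/c) [:1,x:] \<noteq> 0" using order_root[of "[:1,x:]" "-1/c"] by auto
    moreover have "order (-1/c) [:1,x:] \<le> 1"
      using order_degree[of "[:1,x:]" "-1/c"] by (auto split: if_splits)
    ultimately have o1: "order (-1/c) [:1,x:] = 1" by linarith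
    show ?thesis using o1 True by simp
  next
    case False
    have "poly [:1,x:] (-1/c) \<noteq> 0" using False add.prems by (simp add: field_simps)
    then show ?thesis using False by (simp add: order_0I)
  qed
  moreover have pe: "prod_mset (image_mset (\<lambda>x. [:1,x:]) (add_mset x M)) = [:1,x:] * prod_mset (image_mset (\<lambda>x. [:1,x:]) M)"
    by (simp only: image_mset_add_mset prod_mset.add_mset)
  moreover have nz: "[:1,x:] * prod_mset (image_mset (\<lambda>x. [:1,x:]) M) \<noteq> (0::real poly)"
    using PM_nz[of M] by (simp only: mult_eq_0_iff pCons_eq_0_iff one_neq_zero) simp
  ultimately show ?case using order_mult[OF nz, of "-1/c"] add.IH add.prems
    by (simp only:) simp
qed

lemma degree_PM: "degree (prod_mset (image_mset (\<lambda>x. [:1,x:]) M) :: real poly) + count M 0 = size M"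
proof (induction M)
  case empty
  then show ?case by simp
next
  case (add x M)
  have "degree ([:1,x:] * prod_mset (image_mset (\<lambda>x. [:1,x:]) M) :: real poly)
     = degree [:1,x:] + degree (prod_mset (image_mset (\<lambda>x. [:1,x:]) M) :: real poly)"
    by (rule degree_mult_eq) (use PM_nz[of M] in auto)
  then show ?case using add by auto
qed

lemma PP_inj:
  assumes "ordered_nonneg d a" "ordered_nonneg d b" "PP a = PP b"
  shows "a = b"
proof -
  let ?A = "mset a" and ?B = "mset b"
  have eq: "prod_mset (image_mset (\<lambda>x. [:1,x:]) ?A) = prod_mset (image_mset (\<lambda>x. [:1,x:]) ?B)"
    using assms(3) by (simp add: PP_mset)
  have "count ?A c = count ?B c" for c
  proof (cases "c = 0")
    case True
    have "size ?A = size ?B" using assms(1,2) unfolding ordered_nonneg_def by simp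
    then show ?thesis using degree_PM[of ?A] degree_PM[of ?B] eq True by simp
  next
    case False
    then show ?thesis using order_PM[OF False, of ?A] order_PM[OF False, of ?B] eq by simp
  qed
  then have m: "mset (rev a) = mset (rev b)" by (simp add: multiset_eq_iff)
  have "sorted (rev a)" "sorted (rev b)"
    using assms(1,2) unfolding ordered_nonneg_def sorted_rev_iff_nth_Suc by auto
  then have "rev a = rev b"
    using properties_for_sort[OF m] properties_for_sort[OF refl, of "rev b"] by (metis)
  then show ?thesis by simp
qed

lemma pairsum:
  assumes "length a = d" "length b = d"
  shows "(\<Sum>(i,j)\<in>{(i,j). i \<le> d \<and> j \<le> d \<and> i + j = k}. esym i a * esym j b)
       = (\<Sum>i\<le>k. esym i a * esym (k-i) b)"
proof -
  have "{(i,j). i \<le> d \<and> j \<le> d \<and> i + j = k} = (\<lambda>i. (i, k-i)) ` {i. i \<le> k \<and> i \<le> d \<and> k - i \<le> d}"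
    by auto
  moreover have "inj_on (\<lambda>i. (i, k-i)) {i. i \<le> k \<and> i \<le> d \<and> k - i \<le> d}"
    by (auto simp: inj_on_def)
  ultimately have "(\<Sum>(i,j)\<in>{(i,j). i \<le> d \<and> j \<le> d \<and> i + j = k}. esym i a * esym j b)
      = (\<Sum>i\<in>{i. i \<le> k \<and> i \<le> d \<and> k - i \<le> d}. esym i a * esym (k-i) b)"
    by (simp add: sum.reindex)
  also have "\<dots> = (\<Sum>i\<le>k. esym i a * esym (k-i) b)"
  proof (rule sum.mono_neutral_left)
    show "\<forall>i\<in>{..k} - {i. i \<le> k \<and> i \<le> d \<and> k - i \<le> d}. esym i a * esym (k - i) b = 0"
    proof
      fix i assume "i \<in> {..k} - {i. i \<le> k \<and> i \<le> d \<and> k - i \<le> d}"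
      then have "d < i \<or> d < k - i" by auto
      then show "esym i a * esym (k - i) b = 0" using esym_big assms by auto
    qed
  qed auto
  finally show ?thesis .
qed

theorem theorem10:
  fixes d :: nat and s t sb tb :: "real list"
  assumes "ordered_nonneg d s" and "ordered_nonneg d t"
    and "ordered_nonneg d sb" and "ordered_nonneg d tb"
  shows "((s, t) = (sb, tb) \<or> (s, t) = (tb, sb)) \<longleftrightarrow>
    ((\<forall>i\<in>{1..d}. esym i s + esym i t = esym i sb + esym i tb) \<and>
     (\<forall>k\<in>{1..2*d}.
        (\<Sum>(i,j)\<in>{(i,j). i \<le> d \<and> j \<le> d \<and> i + j = k}. esym i s * esym j t) =
        (\<Sum>(i,j)\<in>{(i,j). i \<le> d \<and> j \<le> d \<and> i + j = k}. esym i sb * esym j tb)))"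
    (is "?L \<longleftrightarrow> ?R1 \<and> ?R2")
proof
  assume ?L
  then show "?R1 \<and> ?R2"
  proof
    assume "(s, t) = (tb, sb)"
    then have st: "s = tb" "t = sb" by auto
    have "?R1" unfolding st by (simp add: add.commute)
    moreover have "?R2"
    proof
      fix k
      show "(\<Sum>(i,j)\<in>{(i,j). i \<le> d \<and> j \<le> d \<and> i + j = k}. esym i s * esym j t) =
        (\<Sum>(i,j)\<in>{(i,j). i \<le> d \<and> j \<le> d \<and> i + j = k}. esym i sb * esym j tb)"
        using assms pairsum[of s d t k] pairsum[of sb d tb k] unfolding ordered_nonneg_def
        by (simp add: st coeff_PP[symmetric] coeff_mult[symmetric] mult.commute)
    qed
    ultimately show ?thesis ..
  next
    assume "(s, t) = (sb, tb)"
    then show ?thesis by simp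
  qed
next
  assume R: "?R1 \<and> ?R2"
  have len: "length s = d" "length t = d" "length sb = d" "length tb = d"
    using assms unfolding ordered_nonneg_def by auto
  have sum: "PP s + PP t = PP sb + PP tb"
  proof (rule poly_eqI)
    fix k
    show "coeff (PP s + PP t) k = coeff (PP sb + PP tb) k"
    proof (cases "k = 0")
      case True
      then show ?thesis by (simp add: coeff_PP esym_0)
    next
      case False
      show ?thesis
      proof (cases "k \<le> d")
        case True
        then have "k \<in> {1..d}" using False by simp
        then have "esym k s + esym k t = esym k sb + esym k tb" using conjunct1[OF R] by blast
        then show ?thesis by (simp add: coeff_PP)
      next
        case False
        then show ?thesis using len by (simp add: coeff_PP esym_big)
      qed
    qed
  qed
  have prod: "PP s * PP t = PP sb * PP tb"
  proof (rule poly_eqI)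
    fix k
    have "(\<Sum>(i,j)\<in>{(i,j). i \<le> d \<and> j \<le> d \<and> i + j = k}. esym i s * esym j t) =
        (\<Sum>(i,j)\<in>{(i,j). i \<le> d \<and> j \<le> d \<and> i + j = k}. esym i sb * esym j tb)"
    proof (cases "k = 0")
      case True
      then have "{(i,j). i \<le> d \<and> j \<le> d \<and> i + j = k} = {(0,0)}" by auto
      then show ?thesis by (simp add: esym_0)
    next
      case False
      show ?thesis
      proof (cases "k \<le> 2*d")
        case True
        then have "k \<in> {1..2*d}" using False by simp
        then show ?thesis using conjunct2[OF R] by blast
      next
        case False
        then have e: "{(i,j). i \<le> d \<and> j \<le> d \<and> i + j = k} = {}" by auto
        show ?thesis unfolding e by simp
      qed
    qed
    then show "coeff (PP s * PP t) k = coeff (PP sb * PP tb) k"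
      using pairsum[of s d t k] pairsum[of sb d tb k] len
      by (simp add: coeff_PP coeff_mult)
  qed
  have "(PP s - PP sb) * (PP s - PP tb) = PP s * PP s - PP s * (PP sb + PP tb) + PP sb * PP tb"
    by (simp add: algebra_simps)
  also have "\<dots> = 0" unfolding sum[symmetric] prod[symmetric] by (simp add: algebra_simps)
  finally have "PP s = PP sb \<or> PP s = PP tb" by simp
  then show ?L
  proof
    assume h: "PP s = PP sb"
    then have "PP t = PP tb" using sum by simp
    then have "t = tb" using PP_inj[OF assms(2) assms(4)] by blast
    moreover have "s = sb" using PP_inj[OF assms(1) assms(3) h] .
    ultimately show ?L by simp
  next
    assume h: "PP s = PP tb"
    then have "PP t = PP sb" using sum by simp
    then have "t = sb" using PP_inj[OF assms(2) assms(3)] by blast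
    moreover have "s = tb" using PP_inj[OF assms(1) assms(4) h] .
    ultimately show ?L by simp
  qed
qed

end
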